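(* Let $S$ be a finite alphabet and let $h$ be a cellular automaton on $S^{\mathbb{Z}}$ which is an involution. Let $N\subset\mathbb{Z}$ be its minimal neighbourhood, so that $h(x)_k=\phi(x_{k+n_1},\dots,x_{k+n_t})$ with $N=\{n_1<\dots<n_t\}$ and $\phi$ depending essentially on each argument. Then $h$ is left-permutative if and only if $h$ is one-way to the right, i.e. if and only if $\min N\ge 0$.
   Context: A cellular automaton (CA) on $S^{\mathbb{Z}}$ is a continuous, shift-commuting map, given by a local rule $\phi$ on a finite neighbourhood. A CA is an involution if $h\circ h=\mathrm{id}$. The CA $h$ is left-permutative if, for every fixed values of the other arguments, the map $a\mapsto \phi(a,x_{n_2},\dots,x_{n_t})$ (variation of the argument at the leftmost neighbourhood position $n_1=\min N$) is a bijection of $S$. The CA $h$ is one-way to the right if its neighbourhood is contained in $\mathbb{N}_0=\{0,1,2,\dots\}$, i.e. $h(x)_k$ depends only on $x_j$ with $j\ge k$. *)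

theory Defs
  imports Main
begin

definition shift :: "int \<Rightarrow> (int \<Rightarrow> 'a) \<Rightarrow> (int \<Rightarrow> 'a)" where
  "shift k x = (\<lambda>i. x (i + k))"

definition is_CA :: "((int \<Rightarrow> 'a) \<Rightarrow> (int \<Rightarrow> 'a)) \<Rightarrow> bool" where
  "is_CA h \<longleftrightarrow> (\<forall>k x. h (shift k x) = shift k (h x)) \<and>
     (\<exists>N. finite N \<and> (\<forall>x y. (\<forall>n\<in>N. x n = y n) \<longrightarrow> h x 0 = h y 0))"

definition min_nbhd :: "((int \<Rightarrow> 'a) \<Rightarrow> (int \<Rightarrow> 'a)) \<Rightarrow> int set" where
  "min_nbhd h = {n. \<exists>x a. h (x(n := a)) 0 \<noteq> h x 0}"

definition involution :: "((int \<Rightarrow> 'a) \<Rightarrow> (int \<Rightarrow> 'a)) \<Rightarrow> bool" where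
  "involution h \<longleftrightarrow> h \<circ> h = id"

definition left_permutative :: "((int \<Rightarrow> 'a) \<Rightarrow> (int \<Rightarrow> 'a)) \<Rightarrow> bool" where
  "left_permutative h \<longleftrightarrow> (\<forall>x. bij (\<lambda>a. h (x(Min (min_nbhd h) := a)) 0))"

definition one_way_right :: "((int \<Rightarrow> 'a) \<Rightarrow> (int \<Rightarrow> 'a)) \<Rightarrow> bool" where
  "one_way_right h \<longleftrightarrow> min_nbhd h \<subseteq> {0..}"

end

theory Submission
  imports Defs
begin

lemma nonessential_set:
  assumes "finite F" "\<And>i. i \<notin> F \<Longrightarrow> x i = y i" "\<And>i. i \<in> F \<Longrightarrow> i \<notin> min_nbhd h"
  shows "h x 0 = h y 0"
  using assms
proof (induction F arbitrary: x rule: finite_induct)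
  case empty
  then have "x = y" by auto
  then show ?case by simp
next
  case (insert n F)
  have "n \<notin> min_nbhd h" using insert.prems by auto
  hence e: "h (x(n := y n)) 0 = h x 0" unfolding min_nbhd_def by auto
  have "h (x(n := y n)) 0 = h y 0"
    by (rule insert.IH) (use insert.prems in auto)
  with e show ?case by simp
qed

lemma CA_facts:
  assumes "is_CA h"
  shows "finite (min_nbhd h)"
    and "\<And>x y. (\<forall>n\<in>min_nbhd h. x n = y n) \<Longrightarrow> h x 0 = h y 0"
proof -
  obtain N0 where N0: "finite N0" "\<And>x y. (\<forall>n\<in>N0. x n = y n) \<Longrightarrow> h x 0 = h y 0"
    using assms unfolding is_CA_def by blast
  have sub: "min_nbhd h \<subseteq> N0"
  proof
    fix n assume "n \<in> min_nbhd h"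
    then obtain x a where "h (x(n := a)) 0 \<noteq> h x 0" unfolding min_nbhd_def by blast
    show "n \<in> N0"
    proof (rule ccontr)
      assume "n \<notin> N0"
      hence "\<forall>i\<in>N0. (x(n:=a)) i = x i" by auto
      from N0(2)[OF this] \<open>h (x(n := a)) 0 \<noteq> h x 0\<close> show False by (simp only:)
    qed
  qed
  then show "finite (min_nbhd h)" using N0(1) finite_subset by blast
  fix x y :: "int \<Rightarrow> 'a" assume agree: "\<forall>n\<in>min_nbhd h. x n = y n"
  define w where "w = (\<lambda>i. if i \<in> N0 then x i else y i)"
  have 1: "h w 0 = h x 0" by (rule N0(2)) (simp add: w_def)
  have 2: "h w 0 = h y 0"
    by (rule nonessential_set[of "N0 - min_nbhd h"]) (use N0(1) agree in \<open>auto simp: w_def\<close>)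
  from 1 2 show "h x 0 = h y 0" by simp
qed

lemma CA_shift:
  assumes "is_CA h"
  shows "h x k = h (shift k x) 0"
proof -
  have "h (shift k x) = shift k (h x)" using assms unfolding is_CA_def by blast
  then show ?thesis by (simp add: shift_def)
qed

lemma dep_ge:
  assumes "is_CA h" "\<And>j. j \<ge> k + Min (min_nbhd h) \<Longrightarrow> x j = y j"
  shows "h x k = h y k"
proof -
  have fin: "finite (min_nbhd h)" using CA_facts(1)[OF assms(1)] .
  have "h (shift k x) 0 = h (shift k y) 0"
  proof (rule CA_facts(2)[OF assms(1)], intro ballI)
    fix n assume "n \<in> min_nbhd h"
    hence "Min (min_nbhd h) \<le> n" using fin by simp
    then show "shift k x n = shift k y n" using assms(2)[of "n + k"] by (simp add: shift_def)
  qed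
  then show ?thesis using CA_shift[OF assms(1)] by metis
qed

lemma two_elems:
  fixes h :: "(int \<Rightarrow> 'a) \<Rightarrow> (int \<Rightarrow> 'a)"
  assumes "min_nbhd h \<noteq> {}"
  obtains a b :: 'a where "a \<noteq> b"
proof -
  obtain n where "n \<in> min_nbhd h" using assms by blast
  then obtain x and a :: 'a where "h (x(n := a)) 0 \<noteq> h x 0" unfolding min_nbhd_def by blast
  hence "x(n:=a) \<noteq> x" by auto
  hence "a \<noteq> x n" by auto
  then show ?thesis using that by blast
qed

theorem mainTheorem5:
  fixes h :: "(int \<Rightarrow> 'a::finite) \<Rightarrow> (int \<Rightarrow> 'a)"
  assumes "is_CA h" and "involution h"
  shows "left_permutative h \<longleftrightarrow> one_way_right h"
proof -
  have inv: "\<And>x. h (h x) = x" using assms(2) unfolding involution_def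
    by (metis comp_apply id_apply)
  have fin: "finite (min_nbhd h)" using CA_facts(1)[OF assms(1)] .
  define m where "m = Min (min_nbhd h)"
  show ?thesis
  proof
    assume lp: "left_permutative h"
    show "one_way_right h"
    proof (cases "min_nbhd h = {}")
      case True then show ?thesis by (simp add: one_way_right_def)
    next
      case ne: False
      obtain a b :: 'a where ab: "a \<noteq> b" using two_elems[OF ne] by blast
      have "m \<ge> 0"
      proof (rule ccontr)
        assume "\<not> m \<ge> 0"
        hence mneg: "m < 0" by simp
        define x :: "int \<Rightarrow> 'a" where "x = (\<lambda>_. a)"
        define u where "u = x(2*m := a)"
        define v where "v = x(2*m := b)"
        have bij1: "bij (\<lambda>c. h ((shift m x)(m := c)) 0)" using lp
          unfolding left_permutative_def m_def by blast
        have eqs: "\<And>c. h ((shift m x)(m := c)) 0 = h (x(2*m := c)) m"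
        proof -
          fix c
          have "(shift m x)(m := c) = shift m (x(2*m := c))"
            by (auto simp: shift_def)
          then show "h ((shift m x)(m := c)) 0 = h (x(2*m := c)) m"
            using CA_shift[OF assms(1), of "x(2*m := c)" m] by simp
        qed
        have "inj (\<lambda>c. h (x(2*m := c)) m)" using bij1 eqs bij_is_inj by fastforce
        hence pq: "h u m \<noteq> h v m" using ab unfolding u_def v_def inj_def by blast
        have agree: "\<And>j. j > m \<Longrightarrow> h u j = h v j"
          by (rule dep_ge[OF assms(1)]) (auto simp: u_def v_def m_def)
        define w where "w = h u"
        have bij2: "bij (\<lambda>c. h (w(m := c)) 0)" using lp
          unfolding left_permutative_def m_def by blast
        have "h (h u) 0 = h (w(m := h u m)) 0" by (simp add: w_def)
        moreover have "h (h v) 0 = h (w(m := h v m)) 0"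
          by (rule dep_ge[OF assms(1)]) (auto simp: w_def m_def[symmetric] agree)
        ultimately have "h (h u) 0 \<noteq> h (h v) 0"
          using bij2 pq bij_is_inj unfolding inj_def by metis
        moreover have "u 0 = v 0" using mneg by (simp add: u_def v_def x_def)
        ultimately show False using inv by simp
      qed
      then show ?thesis unfolding one_way_right_def m_def using fin
        by (auto dest: Min_le[OF fin])
    qed
  next
    assume ow: "one_way_right h"
    show "left_permutative h" unfolding left_permutative_def
    proof
      fix x
      show "bij (\<lambda>c. h (x(Min (min_nbhd h) := c)) 0)"
      proof (cases "min_nbhd h = {}")
        case True
        have all: "\<And>y z. h y 0 = h z 0" using CA_facts(2)[OF assms(1)] True by auto
        have sing: "\<And>p q :: 'a. p = q"
        proof -
          fix p q :: 'a
          have "h (h (\<lambda>_. p)) 0 = h (h (\<lambda>_. q)) 0" by (rule all)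
          then show "p = q" using inv by metis
        qed
        show ?thesis unfolding bij_def inj_def surj_def using sing by blast
      next
        case ne: False
        have m0: "m \<ge> 0" using ow ne fin unfolding one_way_right_def m_def by auto
        have "inj (\<lambda>c. h (x(m := c)) 0)"
        proof (rule injI)
          fix a b assume e: "h (x(m := a)) 0 = h (x(m := b)) 0"
          define u where "u = x(m := a)"
          define v where "v = x(m := b)"
          have ag: "\<And>j. j \<ge> 0 \<Longrightarrow> h u j = h v j"
          proof -
            fix j :: int assume "j \<ge> 0"
            show "h u j = h v j"
            proof (cases "j = 0")
              case True then show ?thesis using e by (simp add: u_def v_def)
            next
              case False
              with \<open>j \<ge> 0\<close> have "j > 0" by simp
              show ?thesis
                by (rule dep_ge[OF assms(1)]) (use \<open>j > 0\<close> in \<open>auto simp: u_def v_def m_def[symmetric]\<close>)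
            qed
          qed
          have "h (h u) m = h (h v) m"
            by (rule dep_ge[OF assms(1)]) (use m0 ag in \<open>auto simp: m_def[symmetric]\<close>)
          then have "u m = v m" using inv by simp
          then show "a = b" by (simp add: u_def v_def)
        qed
        then show ?thesis using finite_UNIV_inj_surj[of "\<lambda>c. h (x(m := c)) 0"]
          unfolding m_def bij_def by simp
      qed
    qed
  qed
qed

end
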